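(* Let $n_0\ge1$ and $n_1=2n_0$. For $\ell\in\{0,1\}$ let $\mathbf{h}^\ell_k\in\mathbb{R}^{n_\ell}$, $k=0,\dots,n_\ell-1$, have entries $(\mathbf{h}^\ell_k)_j=\cos\frac{2(j+\frac12)k\pi}{n_\ell}+\sin\frac{2(j+\frac12)k\pi}{n_\ell}$. Let $\mathbf{P}\in\mathbb{R}^{n_1\times n_0}$ with $\mathbf{P}_{2j,j}=\mathbf{P}_{2j+1,j}=1$ ($j=0,\dots,n_0-1$) and all other entries $0$, let $\mathbf{R}=\mathbf{P}^\top$, and let $\mathbf{S}_1\in\mathbb{R}^{n_1\times n_1}$ be the periodic second-order Shapiro filter, $(\mathbf{S}_1\mathbf{x})_j=\frac14(x_{j-1}+2x_j+x_{j+1})$ with indices taken modulo $n_1$. Set $\bar{\mathbf{P}}:=\mathbf{S}_1\mathbf{P}$, $\bar{\mathbf{R}}:=\mathbf{R}\mathbf{S}_1$ and $c_k:=\cos(k\pi/n_1)$. Then for all $k=0,\dots,n_0-1$: $\bar{\mathbf{P}}\mathbf{h}^0_k=c_k^3\mathbf{h}^1_k-c_{n_0+k}^3\mathbf{h}^1_{n_0+k}$, $\bar{\mathbf{R}}\mathbf{h}^1_k=2c_k^3\mathbf{h}^0_k$, and $\bar{\mathbf{R}}\mathbf{h}^1_{n_0+k}=-2c_{n_0+k}^3\mathbf{h}^0_k$.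
   Context: Indices start at $0$. *)

theory Defs
  imports Complex_Main
begin

text \<open>Vectors in R^m are represented as functions nat => real (entries with index < m matter);
  m x n matrices as functions nat => nat => real (entries (i,j) with i < m, j < n matter).\<close>

definition mat_vec :: "nat \<Rightarrow> (nat \<Rightarrow> nat \<Rightarrow> real) \<Rightarrow> (nat \<Rightarrow> real) \<Rightarrow> (nat \<Rightarrow> real)" where
  "mat_vec n A x = (\<lambda>i. \<Sum>j<n. A i j * x j)"

definition mat_mul :: "nat \<Rightarrow> (nat \<Rightarrow> nat \<Rightarrow> real) \<Rightarrow> (nat \<Rightarrow> nat \<Rightarrow> real) \<Rightarrow> (nat \<Rightarrow> nat \<Rightarrow> real)" where
  "mat_mul n A B = (\<lambda>i k. \<Sum>j<n. A i j * B j k)"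

definition transp_mat :: "(nat \<Rightarrow> nat \<Rightarrow> real) \<Rightarrow> (nat \<Rightarrow> nat \<Rightarrow> real)" where
  "transp_mat A = (\<lambda>i j. A j i)"

definition hvec :: "nat \<Rightarrow> nat \<Rightarrow> (nat \<Rightarrow> real)" where
  "hvec m k = (\<lambda>j. cos (2 * (real j + 1/2) * real k * pi / real m)
                  + sin (2 * (real j + 1/2) * real k * pi / real m))"

definition prolong :: "nat \<Rightarrow> nat \<Rightarrow> real" where
  "prolong i j = (if i = 2 * j \<or> i = 2 * j + 1 then 1 else 0)"

definition shapiro :: "nat \<Rightarrow> nat \<Rightarrow> nat \<Rightarrow> real" where
  "shapiro m i j = (1/4) * (if j = (i + m - 1) mod m then 1 else 0)
                 + (1/2) * (if j = i mod m then 1 else 0)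
                 + (1/4) * (if j = (i + 1) mod m then 1 else 0)"

end

theory Submission imports Defs begin

definition G :: "real \<Rightarrow> real \<Rightarrow> real" where "G a t = cos (a*t) + sin (a*t)"

lemma hvec_G: "hvec m k = (\<lambda>j. G (real k*pi/real m) (2*real j+1))"
proof (rule ext)
  fix j
  have "2 * (real j + 1/2) * real k * pi / real m = real k*pi/real m * (2*real j+1)"
    by (cases "m = 0") (simp_all add: field_simps)
  then show "hvec m k j = G (real k*pi/real m) (2*real j+1)" by (simp only: hvec_def G_def)
qed

lemma cos_shift: "cos (x + real n * pi) = (-1)^n * cos x"
  by (simp add: cos_add)
lemma sin_shift: "sin (x + real n * pi) = (-1)^n * sin x"
  by (simp add: sin_add)

lemma G_per: "m > 0 \<Longrightarrow> G (real k*pi/real m) (t + 2*real m) = G (real k*pi/real m) t"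
proof -
  assume m: "m > 0"
  have "real k*pi/real m * (t + 2*real m) = real k*pi/real m * t + real (2*k) * pi"
    using m by (simp add: field_simps)
  then show ?thesis unfolding G_def by (simp only: cos_shift sin_shift) simp
qed

lemma G_pair: "G a (t-d) + G a (t+d) = 2 * cos (a*d) * G a t"
proof -
  have "a*(t-d) = a*t - a*d" "a*(t+d) = a*t + a*d" by (simp_all add: algebra_simps)
  then show ?thesis unfolding G_def by (simp add: cos_add cos_diff sin_add sin_diff algebra_simps)
qed

lemma G_eig: "G a (t-2)/4 + G a t/2 + G a (t+2)/4 = cos a ^ 2 * G a t"
proof -
  have "G a (t-2)/4 + G a t/2 + G a (t+2)/4 = (G a (t-2) + G a (t+2))/4 + G a t/2" by simp
  also have "\<dots> = (1 + cos (2*a))/2 * G a t" by (simp add: G_pair algebra_simps mult.commute)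
  also have "\<dots> = cos a ^ 2 * G a t" by (simp add: cos_double sin_squared_eq)
  finally show ?thesis .
qed

lemma shap:
  assumes m: "m > 0" and i: "i < m" and per: "\<And>s. F (s + 2*real m) = F s"
    and y: "\<And>j. j < m \<Longrightarrow> y j = F (2*real j + 1)"
  shows "(\<Sum>j<m. shapiro m i j * y j) = F (2*real i - 1)/4 + F (2*real i + 1)/2 + F (2*real i + 3)/4"
proof -
  define a where "a = (i + m - 1) mod m"
  define b where "b = (i + 1) mod m"
  have am: "a < m" "b < m" using m by (simp_all add: a_def b_def)
  have "\<And>j. shapiro m i j * y j = (if j=a then y a/4 else 0) + (if j = i then y i/2 else 0)+(if j = b then y b/4 else 0)"
    using i by (simp add: shapiro_def a_def b_def)
  then have "(\<Sum>j<m. shapiro m i j * y j) = (\<Sum>j<m. (if j=a then y a/4 else 0) + (if j = i then y i/2 else 0)+(if j = b then y b/4 else 0))"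
    by simp
  also have "\<dots> = y a/4 + y i/2 + y b/4"
    using am i by (simp add: sum.distrib)
  also have "y a = F (2*real i - 1)"
  proof (cases "i = 0")
    case True
    then have "a = m - 1" using m by (simp add: a_def)
    then have "y a = F (2*real i - 1 + 2*real m)" using y[of a] am m True by (simp add: of_nat_diff)
    then show ?thesis using per by simp
  next
    case False
    then have e: "i + m - 1 = (i - 1) + m" by simp
    have "((i - 1) + m) mod m = i - 1" using i by simp
    then have "a = i - 1" unfolding a_def e .
    then show ?thesis using y[of a] am False by (simp add: of_nat_diff)
  qed
  also have "y i = F (2*real i + 1)" using y i by simp
  also have "y b = F (2*real i + 3)"
  proof (cases "i + 1 = m")
    case True
    then have "b = 0" by (simp add: b_def)
    then have "y b = F 1" using y[of b] am by simp
    moreover have "real m = real i + 1" using True by (simp flip: True)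
    then have "2*real i + 3 = 1 + 2*real m" by simp
    ultimately show ?thesis using per[of 1] by metis
  next
    case False
    then have "b = i + 1" using i by (simp add: b_def)
    then show ?thesis using y[of b] am by (simp add: add.commute)
  qed
  finally show ?thesis .
qed

lemma G_quarter: "G (a + pi/2) (2*real j + 1) = (-1)^j * (cos (a*(2*real j+1)) - sin (a*(2*real j+1)))"
proof -
  have "(a + pi/2) * (2*real j + 1) = (a*(2*real j+1) + pi/2) + real j * pi"
    by (simp add: algebra_simps)
  then show ?thesis unfolding G_def by (simp only: cos_shift sin_shift) (simp add: cos_add sin_add algebra_simps)
qed

lemma G_half: "G (a+pi/2) (4*real i+2) = - G (2*a) (2*real i+1)"
proof -
  have "(a+pi/2) * (4*real i+2) = 2*a*(2*real i+1) + real (2*i+1) * pi"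
    by (simp add: algebra_simps)
  then show ?thesis unfolding G_def by (simp only: cos_shift sin_shift) simp
qed

lemma Yid: "G (2*a) (2*real (j div 2)+1) = cos a * G a (2*real j+1) - cos (a + pi/2) * G (a+pi/2) (2*real j+1)"
proof -
  have c: "cos (a + pi/2) = - sin a" by (simp add: cos_add)
  show ?thesis
  proof (cases "even j")
    case True
    then obtain p where p: "j = 2*p" by blast
    define x where "x = a*(2*real j+1)"
    have e: "2*a*(2*real (j div 2)+1) = x + a" using p by (simp add: x_def algebra_simps)
    have "G (2*a) (2*real (j div 2)+1) = cos (x + a) + sin (x + a)" unfolding G_def e ..
    moreover have "G a (2*real j+1) = cos x + sin x" unfolding G_def x_def ..
    moreover have "(-1::real)^j = 1" using True by simp
    ultimately show ?thesis unfolding c G_quarter x_def[symmetric]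
      by (simp add: cos_add sin_add algebra_simps)
  next
    case False
    then obtain p where p: "j = 2*p+1" using oddE by blast
    define x where "x = a*(2*real j+1)"
    have e: "2*a*(2*real (j div 2)+1) = x - a" using p by (simp add: x_def algebra_simps)
    have "G (2*a) (2*real (j div 2)+1) = cos (x - a) + sin (x - a)" unfolding G_def e ..
    moreover have "G a (2*real j+1) = cos x + sin x" unfolding G_def x_def ..
    moreover have "(-1::real)^j = -1" using False by simp
    ultimately show ?thesis unfolding c G_quarter x_def[symmetric]
      by (simp add: cos_diff sin_diff algebra_simps)
  qed
qed

lemma prolong_alt: "prolong j k = (if k = j div 2 then 1 else 0)"
  unfolding prolong_def by auto

lemma Pbar_red:
  shows "mat_vec n0 (mat_mul (2*n0) S prolong) x i = (\<Sum>j<2*n0. S i j * x (j div 2))"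
proof -
  have "mat_vec n0 (mat_mul (2*n0) S prolong) x i = (\<Sum>k<n0. \<Sum>j<2*n0. S i j * (prolong j k * x k))"
    by (simp add: mat_vec_def mat_mul_def sum_distrib_right mult.assoc)
  also have "\<dots> = (\<Sum>j<2*n0. S i j * (\<Sum>k<n0. prolong j k * x k))"
    by (subst sum.swap) (simp add: sum_distrib_left)
  also have "\<dots> = (\<Sum>j<2*n0. S i j * x (j div 2))"
  proof (rule sum.cong)
    fix j assume "j \<in> {..<2*n0}"
    then have "j div 2 < n0" by auto
    have "(\<Sum>k<n0. prolong j k * x k) = (\<Sum>k<n0. if k = j div 2 then x (j div 2) else 0)"
      by (rule sum.cong) (auto simp: prolong_alt)
    then show "S i j * (\<Sum>k<n0. prolong j k * x k) = S i j * x (j div 2)"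
      using \<open>j div 2 < n0\<close> by simp
  qed simp
  finally show ?thesis .
qed

lemma Rbar_red:
  assumes "i < n0"
  shows "mat_vec (2*n0) (mat_mul (2*n0) (transp_mat prolong) S) x i
    = (\<Sum>l<2*n0. S (2*i) l * x l) + (\<Sum>l<2*n0. S (2*i+1) l * x l)"
proof -
  define z where "z j = (\<Sum>l<2*n0. S j l * x l)" for j
  have "mat_vec (2*n0) (mat_mul (2*n0) (transp_mat prolong) S) x i = (\<Sum>l<2*n0. \<Sum>j<2*n0. prolong j i * (S j l * x l))"
    by (simp add: mat_vec_def mat_mul_def transp_mat_def sum_distrib_right mult.assoc)
  also have "\<dots> = (\<Sum>j<2*n0. prolong j i * z j)"
    by (subst sum.swap) (simp add: sum_distrib_left z_def)
  also have "\<dots> = (\<Sum>j<2*n0. (if j = 2*i then z (2*i) else 0) + (if j = 2*i+1 then z (2*i+1) else 0))"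
    by (rule sum.cong) (auto simp: prolong_def)
  also have "\<dots> = z (2*i) + z (2*i+1)" using assms by (simp add: sum.distrib)
  finally show ?thesis by (simp add: z_def)
qed

lemma S_eig:
  assumes "m > 0" "i < m" "\<And>s. G a (s + 2*real m) = G a s"
  shows "(\<Sum>j<m. shapiro m i j * G a (2*real j+1)) = cos a ^ 2 * G a (2*real i+1)"
proof -
  have "(\<Sum>j<m. shapiro m i j * G a (2*real j+1)) = G a (2*real i - 1)/4 + G a (2*real i + 1)/2 + G a (2*real i + 3)/4"
    by (rule shap[where F = "G a"]) (use assms in auto)
  also have "\<dots> = cos a ^ 2 * G a (2*real i+1)"
    using G_eig[of a "2*real i+1"] by (simp add: algebra_simps)
  finally show ?thesis .
qed

lemma G_dbl: "G a (4*real i+2) = G (2*a) (2*real i+1)"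
  unfolding G_def by (simp add: algebra_simps)

theorem mainTheorem11:
  fixes n0 n1 :: nat
  assumes "n0 \<ge> 1" and "n1 = 2 * n0"
  defines "Pbar \<equiv> mat_mul n1 (shapiro n1) prolong"
      and "Rbar \<equiv> mat_mul n1 (transp_mat prolong) (shapiro n1)"
      and "c \<equiv> (\<lambda>k::nat. cos (real k * pi / real n1))"
  shows "\<forall>k<n0.
           (\<forall>i<n1. mat_vec n0 Pbar (hvec n0 k) i
                    = (c k)^3 * hvec n1 k i - (c (n0 + k))^3 * hvec n1 (n0 + k) i)
         \<and> (\<forall>i<n0. mat_vec n1 Rbar (hvec n1 k) i = 2 * (c k)^3 * hvec n0 k i)
         \<and> (\<forall>i<n0. mat_vec n1 Rbar (hvec n1 (n0 + k)) i = - 2 * (c (n0 + k))^3 * hvec n0 k i)"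
proof (intro allI impI)
  fix k assume k: "k < n0"
  have n1: "n1 = 2*n0" "n1 > 0" using assms(1,2) by auto
  define \<alpha> where "\<alpha> = real k * pi / real n1"
  have eb: "real (n0+k) * pi / real n1 = \<alpha> + pi/2"
    using assms(1) by (simp add: \<alpha>_def n1(1) field_simps)
  have ea: "real k * pi / real n0 = 2*\<alpha>"
    using assms(1) by (simp add: \<alpha>_def n1(1) field_simps)
  have ck: "c k = cos \<alpha>" "c (n0+k) = cos (\<alpha> + pi/2)"
    unfolding c_def \<alpha>_def[symmetric] eb by simp_all
  have h1k: "hvec n1 k = (\<lambda>j. G \<alpha> (2*real j+1))" unfolding hvec_G \<alpha>_def ..
  have h1nk: "hvec n1 (n0+k) = (\<lambda>j. G (\<alpha>+pi/2) (2*real j+1))" unfolding hvec_G eb ..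
  have h0k: "hvec n0 k = (\<lambda>j. G (2*\<alpha>) (2*real j+1))" unfolding hvec_G ea ..
  have perA: "G \<alpha> (s + 2*real n1) = G \<alpha> s" for s
    unfolding \<alpha>_def using G_per n1(2) by blast
  have perB: "G (\<alpha>+pi/2) (s + 2*real n1) = G (\<alpha>+pi/2) s" for s
    unfolding eb[symmetric] using G_per n1(2) by blast
  define F where "F s = cos \<alpha> * G \<alpha> s - cos (\<alpha>+pi/2) * G (\<alpha>+pi/2) s" for s
  have P1: "\<forall>i<n1. mat_vec n0 Pbar (hvec n0 k) i
                    = (c k)^3 * hvec n1 k i - (c (n0 + k))^3 * hvec n1 (n0 + k) i"
  proof (intro allI impI)
    fix i assume i: "i < n1"
    have "mat_vec n0 Pbar (hvec n0 k) i = (\<Sum>j<n1. shapiro n1 i j * hvec n0 k (j div 2))"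
      unfolding Pbar_def n1(1) by (rule Pbar_red)
    also have "\<dots> = F (2*real i - 1)/4 + F (2*real i + 1)/2 + F (2*real i + 3)/4"
    proof (rule shap[OF n1(2) i])
      show "F (s + 2 * real n1) = F s" for s unfolding F_def perA perB ..
      show "hvec n0 k (j div 2) = F (2 * real j + 1)" for j
        unfolding h0k F_def by (rule Yid)
    qed
    also have "\<dots> = cos \<alpha> * (G \<alpha> (2*real i + 1 - 2)/4 + G \<alpha> (2*real i + 1)/2 + G \<alpha> (2*real i + 1 + 2)/4)
       - cos (\<alpha>+pi/2) * (G (\<alpha>+pi/2) (2*real i + 1 - 2)/4 + G (\<alpha>+pi/2) (2*real i + 1)/2 + G (\<alpha>+pi/2) (2*real i + 1 + 2)/4)"
      unfolding F_def by (simp add: field_simps)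
    also have "\<dots> = (c k)^3 * hvec n1 k i - (c (n0 + k))^3 * hvec n1 (n0 + k) i"
      unfolding G_eig ck h1k h1nk by (simp add: power3_eq_cube power2_eq_square)
    finally show "mat_vec n0 Pbar (hvec n0 k) i
                    = (c k)^3 * hvec n1 k i - (c (n0 + k))^3 * hvec n1 (n0 + k) i" .
  qed
  have e4: "2*real (2*i) + 1 = 4*real i + 2 - 1" "2*real (2*i+1) + 1 = 4*real i + 2 + 1" for i :: nat by simp_all
  have P2: "\<forall>i<n0. mat_vec n1 Rbar (hvec n1 k) i = 2 * (c k)^3 * hvec n0 k i"
  proof (intro allI impI)
    fix i assume i: "i < n0"
    have i2: "2*i < n1" "2*i+1 < n1" using i n1 by auto
    have "mat_vec n1 Rbar (hvec n1 k) i = (\<Sum>l<n1. shapiro n1 (2*i) l * hvec n1 k l) + (\<Sum>l<n1. shapiro n1 (2*i+1) l * hvec n1 k l)"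
      unfolding Rbar_def n1(1) using i by (rule Rbar_red)
    also have "\<dots> = cos \<alpha> ^ 2 * (G \<alpha> (4*real i + 2 - 1) + G \<alpha> (4*real i + 2 + 1))"
      unfolding h1k S_eig[OF n1(2) i2(1) perA] S_eig[OF n1(2) i2(2) perA]
      by (simp only: e4(1,2)) (simp add: algebra_simps)
    also have "\<dots> = 2 * (c k)^3 * hvec n0 k i"
      unfolding G_pair G_dbl ck h0k by (simp add: power3_eq_cube power2_eq_square)
    finally show "mat_vec n1 Rbar (hvec n1 k) i = 2 * (c k)^3 * hvec n0 k i" .
  qed
  have P3: "\<forall>i<n0. mat_vec n1 Rbar (hvec n1 (n0 + k)) i = - 2 * (c (n0 + k))^3 * hvec n0 k i"
  proof (intro allI impI)
    fix i assume i: "i < n0"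
    have i2: "2*i < n1" "2*i+1 < n1" using i n1 by auto
    have "mat_vec n1 Rbar (hvec n1 (n0+k)) i = (\<Sum>l<n1. shapiro n1 (2*i) l * hvec n1 (n0+k) l) + (\<Sum>l<n1. shapiro n1 (2*i+1) l * hvec n1 (n0+k) l)"
      unfolding Rbar_def n1(1) using i by (rule Rbar_red)
    also have "\<dots> = cos (\<alpha>+pi/2) ^ 2 * (G (\<alpha>+pi/2) (4*real i + 2 - 1) + G (\<alpha>+pi/2) (4*real i + 2 + 1))"
      unfolding h1nk S_eig[OF n1(2) i2(1) perB] S_eig[OF n1(2) i2(2) perB]
      by (simp only: e4(1,2)) (simp add: algebra_simps)
    also have "\<dots> = - 2 * (c (n0 + k))^3 * hvec n0 k i"
      unfolding G_pair G_half ck h0k by (simp add: power3_eq_cube power2_eq_square)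
    finally show "mat_vec n1 Rbar (hvec n1 (n0 + k)) i = - 2 * (c (n0 + k))^3 * hvec n0 k i" .
  qed
  show "(\<forall>i<n1. mat_vec n0 Pbar (hvec n0 k) i
                    = (c k)^3 * hvec n1 k i - (c (n0 + k))^3 * hvec n1 (n0 + k) i)
         \<and> (\<forall>i<n0. mat_vec n1 Rbar (hvec n1 k) i = 2 * (c k)^3 * hvec n0 k i)
         \<and> (\<forall>i<n0. mat_vec n1 Rbar (hvec n1 (n0 + k)) i = - 2 * (c (n0 + k))^3 * hvec n0 k i)"
    using P1 P2 P3 by blast
qed

end
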